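(* Let $n,m,T\in\mathbb{N}$, $u_{[0,T]}\in\mathbb{R}^{m(T+1)}$, and let $(A,B)\in\mathbb{R}^{n\times n}\times\mathbb{R}^{n\times m}$ be controllable. If $u_{[0,T-1]}$ is persistently exciting of order $n$, then the matrix $\mathcal{H}_1(x_{[0,T]})=\begin{bmatrix}x(0)&\cdots&x(T)\end{bmatrix}$ has full row rank $n$ for every state sequence $x_{[0,T]}$ satisfying $x(t+1)=Ax(t)+Bu(t)$ for all $t\in[0,T-1]$.
   Context: For $v:\mathbb{Z}_+\to\mathbb{R}^q$, $v_{[0,T-1]}=\begin{bmatrix}v(0)^\top & \cdots & v(T-1)^\top\end{bmatrix}^\top$. For $k\in[1,T]$ the Hankel matrix of depth $k$ is the $qk\times(T-k+1)$ block matrix $\mathcal{H}_k(v_{[0,T-1]})$ whose $(i,j)$ block ($i\in[0,k-1]$, $j\in[0,T-k]$) is $v(i+j)$. The sequence $v_{[0,T-1]}$ is persistently exciting of order $k$ if $k\le T$ and $\mathcal{H}_k(v_{[0,T-1]})$ has full row rank. *)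

theory Defs
  imports "Jordan_Normal_Form.DL_Rank"
begin

definition mrank :: "real mat \<Rightarrow> nat" where
  "mrank M = vec_space.rank (dim_row M) M"

definition full_row_rank :: "real mat \<Rightarrow> bool" where
  "full_row_rank M \<longleftrightarrow> mrank M = dim_row M"

text \<open>Hankel matrix of depth k of v(0),...,v(T-1), where each v(t) has dimension q:
  a (q*k) x (T-k+1) matrix whose (i,j) block (of size q x 1) is v(i+j).\<close>
definition hankel :: "nat \<Rightarrow> nat \<Rightarrow> nat \<Rightarrow> (nat \<Rightarrow> real vec) \<Rightarrow> real mat" where
  "hankel q k T v = mat (q * k) (T - k + 1) (\<lambda>(r, c). v (r div q + c) $ (r mod q))"

definition persistently_exciting :: "nat \<Rightarrow> nat \<Rightarrow> (nat \<Rightarrow> real vec) \<Rightarrow> nat \<Rightarrow> bool" where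
  "persistently_exciting q T v k \<longleftrightarrow> k \<le> T \<and> full_row_rank (hankel q k T v)"

text \<open>Kalman controllability matrix [B, AB, ..., A^(n-1) B] and controllability.\<close>
definition ctrb_matrix :: "real mat \<Rightarrow> real mat \<Rightarrow> real mat" where
  "ctrb_matrix A B = mat (dim_row A) (dim_row A * dim_col B)
     (\<lambda>(r, c). ((A ^\<^sub>m (c div dim_col B)) * B) $$ (r, c mod dim_col B))"

definition controllable :: "real mat \<Rightarrow> real mat \<Rightarrow> bool" where
  "controllable A B \<longleftrightarrow> mrank (ctrb_matrix A B) = dim_row A"

end

theory Submission
  imports Defs
begin

lemma sp_mult:
  fixes M :: "real mat"
  assumes M: "M \<in> carrier_mat r c" and xi: "xi \<in> carrier_vec r" and w: "w \<in> carrier_vec c"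
  shows "xi \<bullet> (M *\<^sub>v w) = (\<Sum>l<c. (xi \<bullet> col M l) * w $ l)"
proof -
  have "xi \<bullet> (M *\<^sub>v w) = (\<Sum>i<r. xi $ i * (\<Sum>l<c. M $$ (i,l) * w $ l))"
    using M xi w by (simp add: scalar_prod_def mult_mat_vec_def atLeast0LessThan row_def)
  also have "\<dots> = (\<Sum>l<c. (\<Sum>i<r. xi $ i * M $$ (i,l)) * w $ l)"
    by (simp add: sum_distrib_left sum_distrib_right mult.assoc sum.swap[of _ "{..<c}"])
  also have "\<dots> = (\<Sum>l<c. (xi \<bullet> col M l) * w $ l)"
    using M xi by (intro sum.cong) (auto simp: scalar_prod_def atLeast0LessThan col_def)
  finally show ?thesis .
qed

lemma self_sp_zero:
  fixes v :: "real vec"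
  assumes "v \<bullet> v = 0"
  shows "v = 0\<^sub>v (dim_vec v)"
proof -
  have "(\<Sum>i\<in>{0..<dim_vec v}. v $ i * v $ i) = 0" using assms by (simp add: scalar_prod_def)
  then have "\<forall>i\<in>{0..<dim_vec v}. v $ i * v $ i = 0"
    by (subst sum_nonneg_eq_0_iff[symmetric]) auto
  then show ?thesis by (intro eq_vecI) auto
qed

lemma wide_kernel:
  fixes P :: "real mat"
  assumes P: "P \<in> carrier_mat r c" and rc: "r < c"
  shows "\<exists>v \<in> carrier_vec c. v \<noteq> 0\<^sub>v c \<and> P *\<^sub>v v = 0\<^sub>v r"
proof -
  define Q where "Q = mat c c (\<lambda>(i,j). if i < r then P $$ (i,j) else 0)"
  have Q: "Q \<in> carrier_mat c c" unfolding Q_def by auto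
  have c1: "c - 1 < c" using rc by auto
  have "Q = mat\<^sub>r c c (\<lambda>i. if i = c - 1 then 0\<^sub>v c else row Q i)"
    using rc by (intro eq_matI) (auto simp: Q_def)
  also have "det \<dots> = 0" by (rule det_row_0[OF c1]) (auto simp: Q_def)
  finally have "det Q = 0" .
  then obtain v where v: "v \<in> carrier_vec c" "v \<noteq> 0\<^sub>v c" "Q *\<^sub>v v = 0\<^sub>v c"
    using det_0_iff_vec_prod_zero_field[OF Q] by auto
  have "P *\<^sub>v v = 0\<^sub>v r"
  proof (intro eq_vecI)
    fix i assume "i < dim_vec (0\<^sub>v r)"
    then have i: "i < r" by simp
    have "(Q *\<^sub>v v) $ i = 0" using v i rc by simp
    moreover have "(Q *\<^sub>v v) $ i = (P *\<^sub>v v) $ i"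
      using i rc P v(1) by (auto simp: Q_def mult_mat_vec_def scalar_prod_def row_def intro!: sum.cong)
    ultimately show "(P *\<^sub>v v) $ i = 0\<^sub>v r $ i" using i by simp
  qed (use P in simp)
  then show ?thesis using v by auto
qed


lemma rank_full_left_kernel:
  fixes M :: "real mat"
  assumes M: "M \<in> carrier_mat r c" and rk: "vec_space.rank r M = r"
    and y: "y \<in> carrier_vec r" and orth: "\<forall>j<c. y \<bullet> col M j = 0"
  shows "y = 0\<^sub>v r"
proof -
  interpret V: vec_space "TYPE(real)" r .
  obtain S where S: "maximal S (\<lambda>T. T \<subseteq> set (cols M) \<and> V.lin_indpt T)"
    using maximal_exists[of "(\<lambda>T. T \<subseteq> set (cols M) \<and> V.lin_indpt T)" "card (set (cols M))" "{}"]
    by (meson List.finite_set card_mono empty_iff empty_subsetI V.finite_lin_indpt2 rev_finite_subset)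
  have cardS: "card S = r" using V.rank_card_indpt[OF M S] rk by simp
  have SM: "S \<subseteq> set (cols M)" and li: "V.lin_indpt S" using S unfolding maximal_def by auto
  have SC: "S \<subseteq> carrier_vec r" using SM M cols_dim by blast
  have fS: "finite S" using SM finite_subset by blast
  have "V.basis S"
    by (rule V.dim_li_is_basis) (use fS SC li cardS V.dim_is_n in auto)
  then have span: "V.span S = carrier_vec r" unfolding V.basis_def by simp
  have "y \<in> V.orthogonal_complement S"
  proof -
    have "y \<bullet> z = 0" if "z \<in> S" for z
    proof -
      from that SM obtain j where "j < c" "z = col M j"
        using M by (auto simp: in_set_conv_nth cols_def)
      then show ?thesis using orth by auto
    qed
    then show ?thesis using y unfolding V.orthogonal_complement_def by auto
  qed
  then have "y \<in> V.orthogonal_complement (V.span S)"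
    using V.in_orthogonal_complement_span[OF SC] by simp
  moreover have "y \<in> V.span S" using span y by simp
  ultimately have "y \<bullet> y = 0" unfolding V.orthogonal_complement_def by auto
  then show ?thesis using self_sp_zero y by fastforce
qed

lemma left_kernel_rank_full:
  fixes M :: "real mat"
  assumes M: "M \<in> carrier_mat r c"
    and ker: "\<forall>y\<in>carrier_vec r. (\<forall>j<c. y \<bullet> col M j = 0) \<longrightarrow> y = 0\<^sub>v r"
  shows "vec_space.rank r M = r"
proof -
  interpret V: vec_space "TYPE(real)" r .
  define G where "G = M * transpose_mat M"
  have G: "G \<in> carrier_mat r r" using M unfolding G_def by auto
  have "det G \<noteq> 0"
  proof
    assume "det G = 0"
    then obtain v where v: "v \<in> carrier_vec r" "v \<noteq> 0\<^sub>v r" "G *\<^sub>v v = 0\<^sub>v r"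
      using det_0_iff_vec_prod_zero_field[OF G] by auto
    let ?w = "transpose_mat M *\<^sub>v v"
    have w: "?w \<in> carrier_vec c" using M v by auto
    have "?w \<bullet> ?w = v \<bullet> (M *\<^sub>v ?w)"
      by (rule transpose_vec_mult_scalar[OF M w v(1)])
    also have "M *\<^sub>v ?w = G *\<^sub>v v" unfolding G_def using M v by (simp add: assoc_mult_mat_vec)
    also have "v \<bullet> \<dots> = 0" using v by simp
    finally have "?w = 0\<^sub>v c" using self_sp_zero[of ?w] w M by auto
    then have "\<forall>j<c. v \<bullet> col M j = 0"
    proof (intro allI impI)
      fix j assume j: "j < c" and "?w = 0\<^sub>v c"
      then have "?w $ j = 0" by simp
      moreover have "?w $ j = col M j \<bullet> v" using M j by simp
      ultimately show "v \<bullet> col M j = 0" using comm_scalar_prod[OF v(1), of "col M j"] M j by auto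
    qed
    then show False using ker v by auto
  qed
  then have "G \<in> Units (ring_mat TYPE(real) r undefined)" using det_non_zero_imp_unit[OF G] by auto
  then obtain H where H: "H \<in> carrier_mat r r" "G * H = 1\<^sub>m r"
    unfolding Units_def ring_mat_def by auto
  have span: "V.span (set (cols M)) = carrier_vec r"
  proof
    show "V.span (set (cols M)) \<subseteq> carrier_vec r"
    proof
      fix x assume "x \<in> V.span (set (cols M))"
      moreover have "set (cols M) \<subseteq> carrier_vec r" using M cols_dim by blast
      then have "set (cols M) \<subseteq> carrier V.V" by simp
      ultimately show "x \<in> carrier_vec r" using V.span_closed by auto
    qed
  next
    show "carrier_vec r \<subseteq> V.span (set (cols M))"
    proof
      fix e :: "real vec" assume e: "e \<in> carrier_vec r"
      let ?z = "transpose_mat M *\<^sub>v (H *\<^sub>v e)"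
      have z: "?z \<in> carrier_vec c" using M by (intro carrier_vecI) simp
      have "(G * H) *\<^sub>v e = G *\<^sub>v (H *\<^sub>v e)"
        by (rule assoc_mult_mat_vec[OF G H(1) e])
      also have "\<dots> = M *\<^sub>v ?z" unfolding G_def
        by (rule assoc_mult_mat_vec) (use M H e in auto)
      finally have "(G * H) *\<^sub>v e = M *\<^sub>v ?z" .
      then have "M *\<^sub>v ?z = (G * H) *\<^sub>v e" by simp
      also have "\<dots> = e" using H e by simp
      finally have "M *\<^sub>v ?z = e" .
      then have "e \<in> V.col_space M" using V.col_space_eq[OF M] M e z by auto
      then show "e \<in> V.span (set (cols M))" unfolding V.col_space_def .
    qed
  qed
  have "V.rank M = vectorspace.dim class_ring (V.span_vs (set (cols M)))"
    unfolding V.rank_def ..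
  also have "V.span_vs (set (cols M)) = V.V"
    using span by (simp add: module_vec_def)
  also have "vectorspace.dim class_ring V.V = r" using V.dim_is_n .
  finally show ?thesis .
qed


lemma pow_mat_add:
  fixes A :: "real mat"
  assumes A: "A \<in> carrier_mat n n"
  shows "A ^\<^sub>m (k + s) = A ^\<^sub>m k * A ^\<^sub>m s"
proof (induction s)
  case 0 then show ?case using A by simp
next
  case (Suc s)
  have "A ^\<^sub>m (k + Suc s) = (A ^\<^sub>m k * A ^\<^sub>m s) * A" using Suc by simp
  also have "\<dots> = A ^\<^sub>m k * (A ^\<^sub>m s * A)"
    by (rule assoc_mult_mat) (use A in auto)
  finally show ?case by simp
qed

lemma powv_carrier[simp]:
  fixes A :: "real mat"
  shows "A \<in> carrier_mat n n \<Longrightarrow> v \<in> carrier_vec n \<Longrightarrow> A ^\<^sub>m k *\<^sub>v v \<in> carrier_vec n"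
  by (rule carrier_vecI) simp

lemma sum_div_mod:
  fixes f :: "nat \<Rightarrow> nat \<Rightarrow> real"
  shows "(\<Sum>r<m*n. f (r div m) (r mod m)) = (\<Sum>j<n. \<Sum>l<m. f j l)"
proof -
  have "(\<Sum>j<n. \<Sum>l<m. f j l) = (\<Sum>p\<in>{..<n}\<times>{..<m}. f (fst p) (snd p))"
    by (simp add: sum.cartesian_product split_def)
  also have "\<dots> = (\<Sum>r<m*n. f (r div m) (r mod m))"
  proof (rule sum.reindex_bij_witness[where i = "\<lambda>r. (r div m, r mod m)" and j = "\<lambda>p. fst p * m + snd p"])
    fix p assume "p \<in> {..<n} \<times> {..<m}"
    then show "((fst p * m + snd p) div m, (fst p * m + snd p) mod m) = p" by auto
  next
    fix p assume "p \<in> {..<n} \<times> {..<m}"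
    then obtain a b where ab: "p = (a,b)" "a < n" "b < m" by auto
    have "a * m + b < a * m + m" using ab by simp
    also have "\<dots> = Suc a * m" by simp
    also have "\<dots> \<le> n * m" using ab by (intro mult_le_mono1) simp
    finally show "fst p * m + snd p \<in> {..<m*n}" using ab by (simp add: mult.commute)
  next
    fix a assume a: "a \<in> {..<m*n}"
    show "fst (a div m, a mod m) * m + snd (a div m, a mod m) = a" by simp
  next
    fix a assume a: "a \<in> {..<m*n}"
    then have m: "m > 0" by (cases m) auto
    show "(a div m, a mod m) \<in> {..<n} \<times> {..<m}" using a m
      by (auto simp: less_mult_imp_div_less mult.commute)
  next
    fix p assume "p \<in> {..<n} \<times> {..<m}"
    then show "f ((fst p * m + snd p) div m) ((fst p * m + snd p) mod m) = f (fst p) (snd p)" by auto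
  qed
  finally show ?thesis ..
qed


theorem proposition2:
  fixes n m T :: nat and A B :: "real mat" and u x :: "nat \<Rightarrow> real vec"
  assumes "A \<in> carrier_mat n n" and "B \<in> carrier_mat n m"
    and "\<forall>t\<le>T. u t \<in> carrier_vec m"
    and "controllable A B"
    and "persistently_exciting m T u n"
    and "\<forall>t\<le>T. x t \<in> carrier_vec n"
    and "\<forall>t<T. x (Suc t) = A *\<^sub>v x t + B *\<^sub>v u t"
  shows "full_row_rank (hankel n 1 (Suc T) x)"
proof -
  note A = assms(1) and B = assms(2)
  have uC: "\<And>t. t \<le> T \<Longrightarrow> u t \<in> carrier_vec m" using assms(3) by auto
  have xC: "\<And>t. t \<le> T \<Longrightarrow> x t \<in> carrier_vec n" using assms(6) by auto
  have xS: "\<And>t. t < T \<Longrightarrow> x (Suc t) = A *\<^sub>v x t + B *\<^sub>v u t" using assms(7) by auto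
  have nT: "n \<le> T" and PEr: "mrank (hankel m n T u) = m * n"
    using assms(5) unfolding persistently_exciting_def full_row_rank_def hankel_def by auto
  have HuC: "hankel m n T u \<in> carrier_mat (m * n) (T - n + 1)" unfolding hankel_def by auto
  have colHu: "\<And>t. t < T - n + 1 \<Longrightarrow> col (hankel m n T u) t = vec (m*n) (\<lambda>r. u (r div m + t) $ (r mod m))"
    unfolding hankel_def by auto
  have bC: "\<And>l. l < m \<Longrightarrow> col B l \<in> carrier_vec n" using B by auto
  have key: "xi = 0\<^sub>v n" if xi: "xi \<in> carrier_vec n" and orth: "\<forall>t\<le>T. xi \<bullet> x t = 0" for xi
  proof -
    define lam where "lam k v = xi \<bullet> (A ^\<^sub>m k *\<^sub>v v)" for k v
    have lam_add: "lam k (v + w) = lam k v + lam k w" if "v \<in> carrier_vec n" "w \<in> carrier_vec n" for k v w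
    proof -
      have "A ^\<^sub>m k *\<^sub>v (v + w) = A ^\<^sub>m k *\<^sub>v v + A ^\<^sub>m k *\<^sub>v w"
        using that A by (intro mult_add_distrib_mat_vec[of _ n n]) auto
      moreover have "xi \<bullet> (A ^\<^sub>m k *\<^sub>v v + A ^\<^sub>m k *\<^sub>v w) = xi \<bullet> (A ^\<^sub>m k *\<^sub>v v) + xi \<bullet> (A ^\<^sub>m k *\<^sub>v w)"
        using that A xi by (intro scalar_prod_add_distrib[of _ n]) auto
      ultimately show ?thesis unfolding lam_def by simp
    qed
    have lam_Suc: "lam k (A *\<^sub>v v) = lam (Suc k) v" if "v \<in> carrier_vec n" for k v
    proof -
      have "(A ^\<^sub>m k * A) *\<^sub>v v = A ^\<^sub>m k *\<^sub>v (A *\<^sub>v v)"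
        by (rule assoc_mult_mat_vec) (use A that in auto)
      then show ?thesis unfolding lam_def by simp
    qed
    have lam_shift: "lam (k + s) v = lam k (A ^\<^sub>m s *\<^sub>v v)" if "v \<in> carrier_vec n" for k s v
    proof -
      have "(A ^\<^sub>m k * A ^\<^sub>m s) *\<^sub>v v = A ^\<^sub>m k *\<^sub>v (A ^\<^sub>m s *\<^sub>v v)"
        by (rule assoc_mult_mat_vec) (use A that in auto)
      then show ?thesis unfolding lam_def by (simp add: pow_mat_add[OF A])
    qed
    have lam_B: "lam k (B *\<^sub>v w) = (\<Sum>l<m. lam k (col B l) * w $ l)" if "w \<in> carrier_vec m" for k w
    proof -
      have "(A ^\<^sub>m k * B) *\<^sub>v w = A ^\<^sub>m k *\<^sub>v (B *\<^sub>v w)"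
        by (rule assoc_mult_mat_vec) (use A B that in auto)
      then have "lam k (B *\<^sub>v w) = xi \<bullet> ((A ^\<^sub>m k * B) *\<^sub>v w)" unfolding lam_def by simp
      also have "\<dots> = (\<Sum>l<m. (xi \<bullet> col (A ^\<^sub>m k * B) l) * w $ l)"
        by (rule sp_mult[OF _ xi that]) (use A B in auto)
      also have "\<dots> = (\<Sum>l<m. lam k (col B l) * w $ l)"
      proof (intro sum.cong refl)
        fix l assume "l \<in> {..<m}"
        then have "col (A ^\<^sub>m k * B) l = A ^\<^sub>m k *\<^sub>v col B l"
          by (intro col_mult2) (use A B in auto)
        then show "(xi \<bullet> col (A ^\<^sub>m k * B) l) * w $ l = lam k (col B l) * w $ l"
          unfolding lam_def by simp
      qed
      finally show ?thesis .
    qed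
    have lam_vec: "lam k v = (\<Sum>i<n. (xi \<bullet> col (A ^\<^sub>m k) i) * v $ i)" if "v \<in> carrier_vec n" for k v
      unfolding lam_def by (rule sp_mult[OF _ xi that]) (use A in auto)
    have expand: "\<forall>t. t + k \<le> T \<longrightarrow> xi \<bullet> x (t + k) = lam k (x t) +
        (\<Sum>j<k. \<Sum>l<m. lam (k - 1 - j) (col B l) * u (t + j) $ l)" for k
    proof (induction k)
      case 0 then show ?case unfolding lam_def using A xC by simp
    next
      case (Suc k)
      show ?case
      proof (intro allI impI)
        fix t assume tk: "t + Suc k \<le> T"
        have "xi \<bullet> x (t + Suc k) = xi \<bullet> x (Suc t + k)" by simp
        also have "\<dots> = lam k (x (Suc t)) + (\<Sum>j<k. \<Sum>l<m. lam (k - 1 - j) (col B l) * u (Suc t + j) $ l)"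
          using Suc.IH[rule_format, of "Suc t"] tk by simp
        also have "x (Suc t) = A *\<^sub>v x t + B *\<^sub>v u t" using xS tk by auto
        also have "lam k (A *\<^sub>v x t + B *\<^sub>v u t) = lam (Suc k) (x t) + (\<Sum>l<m. lam k (col B l) * u t $ l)"
          using lam_add[of "A *\<^sub>v x t" "B *\<^sub>v u t" k] lam_Suc[of "x t" k] lam_B[of "u t" k]
            A B xC[of t] uC[of t] tk by auto
        finally show "xi \<bullet> x (t + Suc k) = lam (Suc k) (x t) +
            (\<Sum>j<Suc k. \<Sum>l<m. lam (Suc k - 1 - j) (col B l) * u (t + j) $ l)"
          unfolding sum.lessThan_Suc_shift by (simp add: add.assoc)
      qed
    qed
    define P where "P = mat n (Suc n) (\<lambda>(i,k). xi \<bullet> col (A ^\<^sub>m k) i)"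
    have PC: "P \<in> carrier_mat n (Suc n)" unfolding P_def by auto
    obtain c where c: "c \<in> carrier_vec (Suc n)" "c \<noteq> 0\<^sub>v (Suc n)" "P *\<^sub>v c = 0\<^sub>v n"
      using wide_kernel[OF PC] by auto
    have dep: "(\<Sum>k<Suc n. c $ k * lam k v) = 0" if v: "v \<in> carrier_vec n" for v
    proof -
      have "(\<Sum>k<Suc n. c $ k * lam k v) = (\<Sum>k<Suc n. \<Sum>i<n. c $ k * (xi \<bullet> col (A ^\<^sub>m k) i) * v $ i)"
        using lam_vec[OF v] by (simp add: sum_distrib_left mult.assoc)
      also have "\<dots> = (\<Sum>i<n. \<Sum>k<Suc n. c $ k * (xi \<bullet> col (A ^\<^sub>m k) i) * v $ i)"
        by (rule sum.swap)
      also have "\<dots> = (\<Sum>i<n. (\<Sum>k<Suc n. P $$ (i,k) * c $ k) * v $ i)"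
        unfolding sum_distrib_right
      proof (intro sum.cong refl)
        fix i k assume "i \<in> {..<n}" "k \<in> {..<Suc n}"
        then show "c $ k * (xi \<bullet> col (A ^\<^sub>m k) i) * v $ i = P $$ (i,k) * c $ k * v $ i"
          unfolding P_def by simp
      qed
      also have "\<dots> = 0"
      proof (intro sum.neutral ballI)
        fix i assume i: "i \<in> {..<n}"
        have "(P *\<^sub>v c) $ i = 0" using c i by simp
        moreover have "(P *\<^sub>v c) $ i = (\<Sum>k<Suc n. P $$ (i,k) * c $ k)"
          using i PC c(1) by (auto simp: mult_mat_vec_def scalar_prod_def row_def atLeast0LessThan intro!: sum.cong)
        ultimately show "(\<Sum>k<Suc n. P $$ (i,k) * c $ k) * v $ i = 0" by simp
      qed
      finally show ?thesis .
    qed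
    define D where "D = {k. k < Suc n \<and> c $ k \<noteq> 0}"
    have Dne: "D \<noteq> {}"
    proof
      assume "D = {}"
      then have "c = 0\<^sub>v (Suc n)" using c(1) by (intro eq_vecI) (auto simp: D_def)
      then show False using c(2) by simp
    qed
    have finD: "finite D" unfolding D_def by auto
    define d where "d = Max D"
    have dD: "d \<in> D" unfolding d_def using Max_in[OF finD Dne] .
    then have dn: "d \<le> n" and cd: "c $ d \<noteq> 0" unfolding D_def by auto
    have cz: "c $ k = 0" if "d < k" "k < Suc n" for k
    proof (rule ccontr)
      assume "c $ k \<noteq> 0"
      then have "k \<in> D" using that unfolding D_def by auto
      then have "k \<le> d" unfolding d_def using Max_ge[OF finD] by auto
      then show False using that by simp
    qed
    define g where "g k = c $ k / c $ d" for k
    have gd: "g d = 1" unfolding g_def using cd by simp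
    have dep': "(\<Sum>k<Suc d. g k * lam (k + s) v) = 0" if v: "v \<in> carrier_vec n" for s v
    proof -
      have Av: "A ^\<^sub>m s *\<^sub>v v \<in> carrier_vec n" using A v by auto
      have "(\<Sum>k<Suc d. c $ k * lam (k + s) v) = (\<Sum>k<Suc n. c $ k * lam (k + s) v)"
        by (rule sum.mono_neutral_left) (use dn cz in auto)
      also have "\<dots> = (\<Sum>k<Suc n. c $ k * lam k (A ^\<^sub>m s *\<^sub>v v))" using lam_shift v by simp
      also have "\<dots> = 0" by (rule dep[OF Av])
      finally have "(\<Sum>k<Suc d. c $ k * lam (k + s) v) = 0" .
      then have "(\<Sum>k<Suc d. c $ k * lam (k + s) v) / c $ d = 0" by simp
      then show ?thesis unfolding g_def sum_divide_distrib by (simp add: field_simps)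
    qed
    define Y where "Y j l = (\<Sum>k<Suc d. if j < k then g k * lam (k - 1 - j) (col B l) else 0)" for j l
    have colrel: "(\<Sum>j<n. \<Sum>l<m. Y j l * u (j + t) $ l) = 0" if t: "t + n \<le> T" for t
    proof -
      have e: "xi \<bullet> x (t + k) = lam k (x t) + (\<Sum>j<k. \<Sum>l<m. lam (k - 1 - j) (col B l) * u (t + j) $ l)"
        if "k \<le> d" for k using expand[of k] that dn t by auto
      have "0 = (\<Sum>k<Suc d. g k * (xi \<bullet> x (t + k)))"
        using orth dn t by (intro sum.neutral[symmetric]) auto
      also have "\<dots> = (\<Sum>k<Suc d. g k * lam k (x t)) +
          (\<Sum>k<Suc d. g k * (\<Sum>j<k. \<Sum>l<m. lam (k - 1 - j) (col B l) * u (t + j) $ l))"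
        using e by (simp add: distrib_left sum.distrib)
      also have "(\<Sum>k<Suc d. g k * lam k (x t)) = 0" using dep'[of "x t" 0] xC t by simp
      also have "(\<Sum>k<Suc d. g k * (\<Sum>j<k. \<Sum>l<m. lam (k - 1 - j) (col B l) * u (t + j) $ l)) =
          (\<Sum>k<Suc d. \<Sum>j<n. \<Sum>l<m. (if j < k then g k * lam (k - 1 - j) (col B l) else 0) * u (j + t) $ l)"
      proof (intro sum.cong refl)
        fix k assume k: "k \<in> {..<Suc d}"
        have "g k * (\<Sum>j<k. \<Sum>l<m. lam (k - 1 - j) (col B l) * u (t + j) $ l) =
            (\<Sum>j<k. \<Sum>l<m. (if j < k then g k * lam (k - 1 - j) (col B l) else 0) * u (j + t) $ l)"
          by (simp add: sum_distrib_left mult.assoc add.commute)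
        also have "\<dots> = (\<Sum>j<n. \<Sum>l<m. (if j < k then g k * lam (k - 1 - j) (col B l) else 0) * u (j + t) $ l)"
          by (rule sum.mono_neutral_left) (use k dn in auto)
        finally show "g k * (\<Sum>j<k. \<Sum>l<m. lam (k - 1 - j) (col B l) * u (t + j) $ l) =
            (\<Sum>j<n. \<Sum>l<m. (if j < k then g k * lam (k - 1 - j) (col B l) else 0) * u (j + t) $ l)" .
      qed
      also have "\<dots> = (\<Sum>j<n. \<Sum>k<Suc d. \<Sum>l<m. (if j < k then g k * lam (k - 1 - j) (col B l) else 0) * u (j + t) $ l)"
        by (rule sum.swap)
      also have "\<dots> = (\<Sum>j<n. \<Sum>l<m. \<Sum>k<Suc d. (if j < k then g k * lam (k - 1 - j) (col B l) else 0) * u (j + t) $ l)"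
        by (rule sum.cong[OF refl]) (rule sum.swap)
      also have "\<dots> = (\<Sum>j<n. \<Sum>l<m. Y j l * u (j + t) $ l)"
        by (simp only: Y_def sum_distrib_right)
      finally show ?thesis by simp
    qed
    define y where "y = vec (m * n) (\<lambda>r. Y (r div m) (r mod m))"
    have yC: "y \<in> carrier_vec (m * n)" unfolding y_def by auto
    have y0: "y = 0\<^sub>v (m * n)"
    proof (rule rank_full_left_kernel[OF HuC _ yC])
      show "vec_space.rank (m * n) (hankel m n T u) = m * n"
        using PEr HuC unfolding mrank_def by simp
      show "\<forall>j<T - n + 1. y \<bullet> col (hankel m n T u) j = 0"
      proof (intro allI impI)
        fix t assume t: "t < T - n + 1"
        have "y \<bullet> col (hankel m n T u) t = (\<Sum>r<m*n. Y (r div m) (r mod m) * u (r div m + t) $ (r mod m))"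
          unfolding colHu[OF t] y_def by (simp add: scalar_prod_def atLeast0LessThan)
        also have "\<dots> = (\<Sum>j<n. \<Sum>l<m. Y j l * u (j + t) $ l)"
          by (rule sum_div_mod)
        also have "\<dots> = 0" using colrel t nT by simp
        finally show "y \<bullet> col (hankel m n T u) t = 0" .
      qed
    qed
    have Y0: "Y j l = 0" if "j < n" "l < m" for j l
    proof -
      have jl: "j * m + l < m * n"
      proof -
        have "j * m + l < j * m + m" using that by simp
        also have "\<dots> = (Suc j) * m" by simp
        also have "\<dots> \<le> n * m" using that by (intro mult_le_mono1) simp
        finally show ?thesis by (simp add: mult.commute)
      qed
      have "y $ (j * m + l) = 0" using y0 jl by simp
      then show ?thesis unfolding y_def using jl that by simp
    qed
    have beta0: "\<forall>l<m. lam i (col B l) = 0" for i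
    proof (induction i rule: less_induct)
      case (less i)
      show ?case
      proof (intro allI impI)
        fix l assume l: "l < m"
        show "lam i (col B l) = 0"
        proof (cases "i < d")
          case True
          define j where "j = d - 1 - i"
          have jd: "j < d" using True unfolding j_def by simp
          have "0 = Y j l" using Y0[of j l] jd dn l by simp
          also have "\<dots> = (if j < d then g d * lam (d - 1 - j) (col B l) else 0) +
              (\<Sum>k<d. if j < k then g k * lam (k - 1 - j) (col B l) else 0)"
            unfolding Y_def by simp
          also have "(\<Sum>k<d. if j < k then g k * lam (k - 1 - j) (col B l) else 0) = 0"
          proof (intro sum.neutral ballI)
            fix k assume k: "k \<in> {..<d}"
            show "(if j < k then g k * lam (k - 1 - j) (col B l) else 0) = 0"
            proof (cases "j < k")
              case True
              then have "k - 1 - j < i" using k unfolding j_def by auto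
              then show ?thesis using less l by simp
            qed simp
          qed
          also have "d - 1 - j = i" unfolding j_def using True by simp
          finally show ?thesis using gd jd by simp
        next
          case False
          define s where "s = i - d"
          have "0 = (\<Sum>k<Suc d. g k * lam (k + s) (col B l))" using dep'[OF bC[OF l]] by simp
          also have "\<dots> = g d * lam (d + s) (col B l) + (\<Sum>k<d. g k * lam (k + s) (col B l))" by simp
          also have "(\<Sum>k<d. g k * lam (k + s) (col B l)) = 0"
          proof (intro sum.neutral ballI)
            fix k assume k: "k \<in> {..<d}"
            then have "k + s < i" using False unfolding s_def by auto
            then show "g k * lam (k + s) (col B l) = 0" using less l by simp
          qed
          also have "d + s = i" using False unfolding s_def by simp
          finally show ?thesis using gd by simp
        qed
      qed
    qed
    have CC: "ctrb_matrix A B \<in> carrier_mat n (n * m)" unfolding ctrb_matrix_def using A B by auto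
    show ?thesis
    proof (rule rank_full_left_kernel[OF CC _ xi])
      show "vec_space.rank n (ctrb_matrix A B) = n"
        using assms(4) A CC unfolding controllable_def mrank_def by simp
      show "\<forall>j<n * m. xi \<bullet> col (ctrb_matrix A B) j = 0"
      proof (intro allI impI)
        fix j assume j: "j < n * m"
        then have m0: "m > 0" by (cases m) auto
        have jm: "j mod m < m" using m0 by simp
        have "col (ctrb_matrix A B) j = col (A ^\<^sub>m (j div m) * B) (j mod m)"
          unfolding ctrb_matrix_def using A B j jm by (intro eq_vecI) auto
        also have "\<dots> = A ^\<^sub>m (j div m) *\<^sub>v col B (j mod m)"
          by (rule col_mult2) (use A B jm in auto)
        finally have "xi \<bullet> col (ctrb_matrix A B) j = lam (j div m) (col B (j mod m))"
          unfolding lam_def by simp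
        then show "xi \<bullet> col (ctrb_matrix A B) j = 0" using beta0 jm by simp
      qed
    qed
  qed
  have H1C: "hankel n 1 (Suc T) x \<in> carrier_mat n (Suc T)" unfolding hankel_def by auto
  have colH1: "col (hankel n 1 (Suc T) x) t = x t" if "t < Suc T" for t
    unfolding hankel_def using that xC[of t] by (intro eq_vecI) auto
  have "vec_space.rank n (hankel n 1 (Suc T) x) = n"
  proof (rule left_kernel_rank_full[OF H1C])
    show "\<forall>y\<in>carrier_vec n. (\<forall>j<Suc T. y \<bullet> col (hankel n 1 (Suc T) x) j = 0) \<longrightarrow> y = 0\<^sub>v n"
      using key colH1 by auto
  qed
  then show ?thesis unfolding full_row_rank_def mrank_def using H1C by simp
qed

end
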